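(* Let $P\subset\mathbb R^n$ be a bounded open convex set and let $\phi\in L^1(P)$ be a convex function with $\int_P\phi\,d\mu=0$, where $\mu$ is Lebesgue measure. Then $$-\frac{2}{n+1}\left(\frac{n}{n+1}\right)^n\inf_P\phi\;\le\;\frac{1}{\mu(P)}\int_P|\phi|\,d\mu\;\le\;-2\inf_P\phi .$$ Both constants are sharp: for each $n$ the constant $\frac{2}{n+1}\left(\frac{n}{n+1}\right)^n$ cannot be replaced by a larger one and the constant $2$ cannot be replaced by a smaller one (in the class of all such pairs $P,\phi$ in $\mathbb R^n$).
   Context: $\mu$ denotes Lebesgue measure on $\mathbb R^n$. *)

theory Defs
  imports "HOL-Analysis.Analysis"
begin

definition admissible :: "'a::euclidean_space set \<Rightarrow> ('a \<Rightarrow> real) \<Rightarrow> bool" where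
  "admissible P \<phi> \<longleftrightarrow> bounded P \<and> open P \<and> convex P \<and> P \<noteq> {} \<and>
     convex_on P \<phi> \<and> set_integrable lebesgue P \<phi> \<and> (LINT x:P|lebesgue. \<phi> x) = 0"

definition avg_abs :: "'a::euclidean_space set \<Rightarrow> ('a \<Rightarrow> real) \<Rightarrow> real" where
  "avg_abs P \<phi> = (LINT x:P|lebesgue. \<bar>\<phi> x\<bar>) / measure lebesgue P"

end

theory Submission
  imports Defs
begin



lemma layer_cake_gt:
  fixes f :: "'a::euclidean_space \<Rightarrow> real"
  assumes f[measurable]: "f \<in> borel_measurable borel" and nn: "\<And>x. 0 \<le> f x"
  shows "(\<integral>\<^sup>+x. ennreal (f x) \<partial>lborel) = (\<integral>\<^sup>+t. indicator {0..} t * emeasure lborel {x. t < f x} \<partial>lborel)"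
proof -
  define S where "S = {p::'a \<times> real. 0 \<le> snd p \<and> snd p < f (fst p)}"
  have S[measurable]: "S \<in> sets (lborel \<Otimes>\<^sub>M lborel)"
  proof -
    have "Measurable.pred (lborel \<Otimes>\<^sub>M lborel) (\<lambda>p::'a \<times> real. 0 \<le> snd p \<and> snd p < f (fst p))"
      by measurable
    then show ?thesis by (simp add: pred_def S_def space_pair_measure)
  qed
  have "(\<integral>\<^sup>+x. ennreal (f x) \<partial>lborel) = (\<integral>\<^sup>+x. (\<integral>\<^sup>+t. indicator S (x,t) \<partial>lborel) \<partial>lborel)"
  proof (rule nn_integral_cong)
    fix x
    have "indicator S (x,t) = (indicator {0..<f x} t :: ennreal)" for t
      by (auto simp: S_def indicator_def)
    then have "(\<integral>\<^sup>+t. indicator S (x,t) \<partial>lborel) = emeasure lborel {0..<f x}"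
      by simp
    then show "ennreal (f x) = (\<integral>\<^sup>+t. indicator S (x,t) \<partial>lborel)" using nn[of x] by simp
  qed
  also have "\<dots> = (\<integral>\<^sup>+t. (\<integral>\<^sup>+x. indicator S (x,t) \<partial>lborel) \<partial>lborel)"
    by (rule lborel_pair.Fubini'[symmetric]) measurable
  also have "\<dots> = (\<integral>\<^sup>+t. indicator {0..} t * emeasure lborel {x. t < f x} \<partial>lborel)"
  proof (rule nn_integral_cong)
    fix t :: real
    show "(\<integral>\<^sup>+x. indicator S (x,t) \<partial>lborel) = indicator {0..} t * emeasure lborel {x. t < f x}"
    proof (cases "0 \<le> t")
      case True
      have "indicator S (x,t) = (indicator {x. t < f x} x :: ennreal)" for x
        using True by (auto simp: S_def indicator_def)
      then show ?thesis using True by simp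
    next
      case False
      have "indicator S (x,t) = (0 :: ennreal)" for x
        using False by (auto simp: S_def indicator_def)
      then show ?thesis using False by simp
    qed
  qed
  finally show ?thesis .
qed



lemma layer_cake_ge:
  fixes f :: "'a::euclidean_space \<Rightarrow> real"
  assumes f[measurable]: "f \<in> borel_measurable borel" and nn: "\<And>x. 0 \<le> f x"
  shows "(\<integral>\<^sup>+x. ennreal (f x) \<partial>lborel) = (\<integral>\<^sup>+t. indicator {0..} t * emeasure lborel {x. t \<le> f x} \<partial>lborel)"
proof -
  define S where "S = {p::'a \<times> real. 0 \<le> snd p \<and> snd p \<le> f (fst p)}"
  have S[measurable]: "S \<in> sets (lborel \<Otimes>\<^sub>M lborel)"
  proof -
    have "Measurable.pred (lborel \<Otimes>\<^sub>M lborel) (\<lambda>p::'a \<times> real. 0 \<le> snd p \<and> snd p \<le> f (fst p))"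
      by measurable
    then show ?thesis by (simp add: pred_def S_def space_pair_measure)
  qed
  have "(\<integral>\<^sup>+x. ennreal (f x) \<partial>lborel) = (\<integral>\<^sup>+x. (\<integral>\<^sup>+t. indicator S (x,t) \<partial>lborel) \<partial>lborel)"
  proof (rule nn_integral_cong)
    fix x
    have "indicator S (x,t) = (indicator {0..f x} t :: ennreal)" for t
      by (auto simp: S_def indicator_def)
    then have "(\<integral>\<^sup>+t. indicator S (x,t) \<partial>lborel) = emeasure lborel {0..f x}"
      by simp
    then show "ennreal (f x) = (\<integral>\<^sup>+t. indicator S (x,t) \<partial>lborel)" using nn[of x] by simp
  qed
  also have "\<dots> = (\<integral>\<^sup>+t. (\<integral>\<^sup>+x. indicator S (x,t) \<partial>lborel) \<partial>lborel)"
    by (rule lborel_pair.Fubini'[symmetric]) measurable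
  also have "\<dots> = (\<integral>\<^sup>+t. indicator {0..} t * emeasure lborel {x. t \<le> f x} \<partial>lborel)"
  proof (rule nn_integral_cong)
    fix t :: real
    show "(\<integral>\<^sup>+x. indicator S (x,t) \<partial>lborel) = indicator {0..} t * emeasure lborel {x. t \<le> f x}"
    proof (cases "0 \<le> t")
      case True
      have "indicator S (x,t) = (indicator {x. t \<le> f x} x :: ennreal)" for x
        using True by (auto simp: S_def indicator_def)
      then show ?thesis using True by simp
    next
      case False
      have "indicator S (x,t) = (0 :: ennreal)" for x
        using False by (auto simp: S_def indicator_def)
      then show ?thesis using False by simp
    qed
  qed
  finally show ?thesis .
qed



lemma scale_mono:
  fixes K L :: "'a::euclidean_space set"
  assumes L: "L \<in> sets borel" and K: "K \<in> sets borel" and sub: "(\<lambda>u. s *\<^sub>R u + c) ` K \<subseteq> L"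
  shows "ennreal (\<bar>s\<bar>^DIM('a)) * emeasure lborel K \<le> emeasure lborel L"
proof -
  have "ennreal (\<bar>s\<bar>^DIM('a)) * emeasure lborel K = emeasure lebesgue ((\<lambda>u. s *\<^sub>R u + c) ` K)"
    using emeasure_lebesgue_affine[of s c K] K by simp
  also have "\<dots> \<le> emeasure lebesgue L"
    by (rule emeasure_mono[OF sub]) (use L in simp)
  also have "\<dots> = emeasure lborel L" using L by simp
  finally show ?thesis .
qed

lemma pow_aux: "real n * X^(n - Suc 0) * X = real n * (X::real)^n"
  by (cases n) auto

lemma ftc_A:
  fixes a k :: real and n :: nat
  assumes "a > 0"
  shows "((\<lambda>t. (1 - t/a)^n * k) has_integral (a * k / (real n + 1))) {0..a}"
proof -
  define G where "G t = - (a / (real n + 1)) * (1 - t/a)^(n+1) * k" for t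
  have "((\<lambda>t. (1 - t/a)^n * k) has_integral (G a - G 0)) {0..a}"
  proof (rule fundamental_theorem_of_calculus)
    show "0 \<le> a" using assms by simp
    fix t assume "t \<in> {0..a}"
    have d: "((\<lambda>t. (1 - t/a)^(n+1)) has_real_derivative ((real n + 1) * (1 - t/a)^n * (-1/a))) (at t within {0..a})"
      using assms apply (auto intro!: derivative_eq_intros)
      unfolding pow_aux by (simp add: diff_divide_distrib[symmetric] algebra_simps)
    have e: "- (a / (real n + 1)) * ((real n + 1) * X * (-1/a)) * k = X * k" for X
    proof -
      have "real n + 1 > 0" by simp
      moreover have "m > 0 \<Longrightarrow> a > 0 \<Longrightarrow> V * 1 - (a / m) * (m * X * (1/a)) * k = V - X * k" for m
        by (simp add: field_simps)
      moreover have "m > 0 \<Longrightarrow> a > 0 \<Longrightarrow> - (a / m) * (m * X * (-1/a)) * k = X * k" for m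
        by (simp add: field_simps)
      ultimately show ?thesis using assms by blast
    qed
    have "(G has_real_derivative - (a / (real n + 1)) * ((real n + 1) * (1 - t/a)^n * (-1/a)) * k) (at t within {0..a})"
      unfolding G_def by (intro DERIV_cmult_right DERIV_cmult d)
    then have "(G has_real_derivative (1 - t/a)^n * k) (at t within {0..a})"
      unfolding e .
    from this show "(G has_vector_derivative (1 - t/a)^n * k) (at t within {0..a})"
      by (simp add: has_real_derivative_iff_has_vector_derivative)
  qed
  moreover have "G a - G 0 = a * k / (real n + 1)"
    unfolding G_def using assms by (simp add: field_simps)
  ultimately show ?thesis by simp
qed

lemma ftc_B:
  fixes a k V :: real and n :: nat
  assumes "a > 0" "n \<ge> 1"
  shows "((\<lambda>t. V - (1 + t/a)^n * k) has_integral
     (a * V / real n - a * k * ((1 + 1/real n)^(n+1) - 1) / (real n + 1))) {0..a/real n}"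
proof -
  define G where "G t = V * t - (a / (real n + 1)) * (1 + t/a)^(n+1) * k" for t
  have "((\<lambda>t. V - (1 + t/a)^n * k) has_integral (G (a/real n) - G 0)) {0..a/real n}"
  proof (rule fundamental_theorem_of_calculus)
    show "0 \<le> a/real n" using assms by simp
    fix t assume "t \<in> {0..a/real n}"
    have d: "((\<lambda>t. (1 + t/a)^(n+1)) has_real_derivative ((real n + 1) * (1 + t/a)^n * (1/a))) (at t within {0..a/real n})"
      using assms apply (auto intro!: derivative_eq_intros)
      unfolding pow_aux by (simp add: add_divide_distrib[symmetric] algebra_simps)
    have e: "V * 1 - (a / (real n + 1)) * ((real n + 1) * X * (1/a)) * k = V - X * k" for X
    proof -
      have "real n + 1 > 0" by simp
      moreover have "m > 0 \<Longrightarrow> a > 0 \<Longrightarrow> V * 1 - (a / m) * (m * X * (1/a)) * k = V - X * k" for m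
        by (simp add: field_simps)
      moreover have "m > 0 \<Longrightarrow> a > 0 \<Longrightarrow> - (a / m) * (m * X * (-1/a)) * k = X * k" for m
        by (simp add: field_simps)
      ultimately show ?thesis using assms by blast
    qed
    have "(G has_real_derivative V * 1 - (a / (real n + 1)) * ((real n + 1) * (1 + t/a)^n * (1/a)) * k) (at t within {0..a/real n})"
      unfolding G_def by (intro derivative_intros DERIV_cmult_right DERIV_cmult d)
    then have "(G has_real_derivative V - (1 + t/a)^n * k) (at t within {0..a/real n})"
      unfolding e .
    then show "(G has_vector_derivative V - (1 + t/a)^n * k) (at t within {0..a/real n})"
      by (simp add: has_real_derivative_iff_has_vector_derivative)
  qed
  moreover have "G (a/real n) - G 0 = a * V / real n - a * k * ((1 + 1/real n)^(n+1) - 1) / (real n + 1)"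
  proof -
    define Q where "Q = (1 + 1/real n)^(n+1)"
    have "(1 + (a/real n)/a) = 1 + 1/real n" using assms by simp
    then have "G (a/real n) - G 0 = V*(a/real n) - a/(real n+1)*Q*k + a/(real n+1)*k"
      unfolding G_def Q_def by simp
    also have "\<dots> = a * V / real n - a * k * (Q - 1) / (real n + 1)"
    proof -
      have "N \<noteq> 0 \<Longrightarrow> M \<noteq> 0 \<Longrightarrow> V*(a/N) - a/M*Q*k + a/M*k = a * V / N - a * k * (Q - 1) / M" for N M :: real
        by (simp add: field_simps)
      moreover have "real n \<noteq> 0" "real n + 1 \<noteq> 0" using assms by auto
      ultimately show ?thesis by blast
    qed
    finally show ?thesis unfolding Q_def .
  qed
  ultimately show ?thesis by simp
qed


lemma core:
  fixes P :: "'a::euclidean_space set" and \<phi> :: "'a \<Rightarrow> real"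
  assumes oP: "open P" and cP: "convex P" and bP: "bounded P" and cvx: "convex_on P \<phi>"
    and x0: "x0 \<in> P" and ax: "\<phi> x0 = - a" and a: "a > 0"
    and intn: "integrable lborel (\<lambda>x. indicator P x * max 0 (- \<phi> x))"
    and intp: "integrable lborel (\<lambda>x. indicator P x * max 0 (\<phi> x))"
    and eq: "integral\<^sup>L lborel (\<lambda>x. indicator P x * max 0 (- \<phi> x)) = integral\<^sup>L lborel (\<lambda>x. indicator P x * max 0 (\<phi> x))"
  shows "a * (real DIM('a) / (real DIM('a) + 1))^DIM('a) * measure lborel P / (real DIM('a) + 1)
           \<le> integral\<^sup>L lborel (\<lambda>x. indicator P x * max 0 (- \<phi> x))"
proof -
  define n where "n = DIM('a)"
  have n1: "n \<ge> 1" unfolding n_def using DIM_positive[where 'a='a] by linarith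
  define Fn where "Fn = (\<lambda>x. indicator P x * max 0 (- \<phi> x))"
  define Fp where "Fp = (\<lambda>x. indicator P x * max 0 (\<phi> x))"
  have cont: "continuous_on P \<phi>" using convex_on_continuous[OF oP cvx] .
  have Pb: "P \<in> sets borel" using oP by simp
  have Fn_m[measurable]: "Fn \<in> borel_measurable borel"
  proof -
    have "continuous_on P (\<lambda>x. max 0 (- \<phi> x))" using cont by (intro continuous_intros)
    from borel_measurable_continuous_on_indicator[OF Pb this] show ?thesis by (simp add: Fn_def)
  qed
  have Fp_m[measurable]: "Fp \<in> borel_measurable borel"
  proof -
    have "continuous_on P (\<lambda>x. max 0 (\<phi> x))" using cont by (intro continuous_intros)
    from borel_measurable_continuous_on_indicator[OF Pb this] show ?thesis by (simp add: Fp_def)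
  qed
  have G_m[measurable]: "(\<lambda>x. indicator P x *\<^sub>R \<phi> x) \<in> borel_measurable borel"
    by (rule borel_measurable_continuous_on_indicator[OF Pb cont])
  have Lb: "{x\<in>P. \<phi> x \<le> t} \<in> sets borel" for t
  proof -
    have "{x\<in>P. \<phi> x \<le> t} = P \<inter> {x. indicator P x *\<^sub>R \<phi> x \<le> t}" by (auto simp: indicator_def)
    also have "\<dots> \<in> sets borel" using Pb by measurable
    finally show ?thesis .
  qed
  define K where "K = {x\<in>P. \<phi> x \<le> 0}"
  have Kb: "K \<in> sets borel" unfolding K_def by (rule Lb)
  have KP: "K \<subseteq> P" by (auto simp: K_def)
  have finP: "emeasure lborel P < \<infinity>" using bP by (rule emeasure_bounded_finite)
  have finsub: "emeasure lborel S < \<infinity>" if "S \<subseteq> P" "S \<in> sets borel" for S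
    using emeasure_mono[of S P lborel] that Pb finP by auto
  define V where "V = measure lborel P"
  define k where "k = measure lborel K"
  have eK: "emeasure lborel K = ennreal k"
    unfolding k_def using finsub[OF KP Kb] by (simp add: emeasure_eq_ennreal_measure)
  have k0: "0 \<le> k" by (simp add: k_def)
  have Fn_nn: "\<And>x. 0 \<le> Fn x" by (simp add: Fn_def)
  have Fp_nn: "\<And>x. 0 \<le> Fp x" by (simp add: Fp_def)
  have intn': "integrable lborel Fn" using intn by (simp add: Fn_def)
  have intp': "integrable lborel Fp" using intp by (simp add: Fp_def)

  have A: "a * k / (real n + 1) \<le> integral\<^sup>L lborel Fn"
  proof -
    have "ennreal (a * k / (real n + 1)) = (\<integral>\<^sup>+t. ennreal ((1 - t/a)^n * k) * indicator {0..a} t \<partial>lborel)"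
    proof (rule nn_integral_has_integral_lebesgue'[symmetric])
      show "((\<lambda>t. (1 - t/a)^n * k) has_integral (a * k / (real n + 1))) {0..a}" by (rule ftc_A[OF a])
      fix t assume "t \<in> {0..a}"
      then have "0 \<le> 1 - t/a" using a by (auto simp: field_simps)
      then show "0 \<le> (1 - t/a)^n * k" using k0 by simp
    qed
    also have "\<dots> \<le> (\<integral>\<^sup>+t. indicator {0..} t * emeasure lborel {x. t \<le> Fn x} \<partial>lborel)"
    proof (rule nn_integral_mono)
      fix t :: real
      show "ennreal ((1 - t/a)^n * k) * indicator {0..a} t \<le> indicator {0..} t * emeasure lborel {x. t \<le> Fn x}"
      proof (cases "t \<in> {0..a}")
        case False then show ?thesis by simp
      next
        case True
        define s where "s = 1 - t/a"
        have ta: "0 \<le> t/a" "t/a \<le> 1" using True a by auto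
        have s01: "0 \<le> s" "s \<le> 1" using ta by (auto simp: s_def)
        have sub: "(\<lambda>u. s *\<^sub>R u + (t/a) *\<^sub>R x0) ` K \<subseteq> {x. t \<le> Fn x}"
        proof
          fix y assume "y \<in> (\<lambda>u. s *\<^sub>R u + (t/a) *\<^sub>R x0) ` K"
          then obtain u where u: "u \<in> K" "y = s *\<^sub>R u + (t/a) *\<^sub>R x0" by auto
          have uP: "u \<in> P" using u KP by auto
          have yP: "y \<in> P" using convexD[OF cP uP x0 s01(1) ta(1)] u s_def by auto
          have "\<phi> y \<le> (1 - t/a) * \<phi> u + (t/a) * \<phi> x0"
            using convex_onD[OF cvx ta uP x0] u s_def by simp
          also have "\<dots> \<le> - t"
          proof -
            have "(1 - t/a) * \<phi> u \<le> 0" using u(1) s01 s_def by (auto simp: K_def mult_nonneg_nonpos)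
            moreover have "(t/a) * \<phi> x0 = - t" using ax a by simp
            ultimately show ?thesis by linarith
          qed
          finally show "y \<in> {x. t \<le> Fn x}" using yP by (simp add: Fn_def)
        qed
        have "{x. t \<le> Fn x} \<in> sets borel" by measurable
        from scale_mono[OF this Kb sub]
        have "ennreal (\<bar>s\<bar>^n) * emeasure lborel K \<le> emeasure lborel {x. t \<le> Fn x}" by (simp add: n_def)
        then show ?thesis using True s01 eK k0 by (simp add: s_def ennreal_mult)
      qed
    qed
    also have "\<dots> = (\<integral>\<^sup>+x. ennreal (Fn x) \<partial>lborel)" by (rule layer_cake_ge[symmetric]) (use Fn_nn in auto)
    also have "\<dots> = ennreal (integral\<^sup>L lborel Fn)"
      by (rule nn_integral_eq_integral) (use intn' Fn_nn in auto)
    finally have "ennreal (a * k / (real n + 1)) \<le> ennreal (integral\<^sup>L lborel Fn)" .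
    moreover have "0 \<le> integral\<^sup>L lborel Fn" using Fn_nn by (simp add: integral_nonneg)
    ultimately show ?thesis by (simp add: ennreal_le_iff)
  qed

  define H where "H = (real n / (real n + 1))^n"
  define Q where "Q = (1 + 1 / real n)^(n+1)"
  have HQ: "H * (1 + 1 / real n)^n = 1"
  proof -
    have gN: "N > 0 \<Longrightarrow> (N / (N + 1)) * (1 + 1 / N) = 1" for N :: real
    proof -
      assume N: "N > 0"
      have "1 + 1/N = (N+1)/N" using N by (simp add: field_simps)
      moreover have "N + 1 \<noteq> 0" using N by simp
      ultimately show ?thesis using N by simp
    qed
    have "real n > 0" using n1 by simp
    from gN[OF this] have "(real n / (real n + 1)) * (1 + 1 / real n) = 1" .
    then show ?thesis unfolding H_def by (metis power_mult_distrib power_one)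
  qed
  have H0: "0 < H" unfolding H_def using n1 by simp

  have B: "a * V / real n - a * k * (Q - 1) / (real n + 1) \<le> integral\<^sup>L lborel Fp" if kV: "k < H * V"
  proof -
    have "ennreal (a * V / real n - a * k * (Q - 1) / (real n + 1)) =
       (\<integral>\<^sup>+t. ennreal (V - (1 + t/a)^n * k) * indicator {0..a/real n} t \<partial>lborel)"
    proof (rule nn_integral_has_integral_lebesgue'[symmetric])
      show "((\<lambda>t. V - (1 + t/a)^n * k) has_integral (a * V / real n - a * k * (Q - 1) / (real n + 1))) {0..a/real n}"
        unfolding Q_def by (rule ftc_B[OF a n1])
      fix t assume t: "t \<in> {0..a/real n}"
      have "(1 + t/a)^n \<le> (1 + 1/real n)^n"
      proof (rule power_mono)
        have "t/a \<le> (a/real n)/a" using t a by (intro divide_right_mono) auto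
        also have "\<dots> = 1/real n" using a by simp
        finally show "1 + t/a \<le> 1 + 1/real n" by simp
        show "0 \<le> 1 + t/a" using t a by simp
      qed
      then have "(1 + t/a)^n * k \<le> (1 + 1/real n)^n * k" using k0 by (rule mult_right_mono)
      also have "\<dots> \<le> (1 + 1/real n)^n * (H * V)" using kV by (intro mult_left_mono) auto
      also have "\<dots> = V" using HQ by (simp add: mult.assoc[symmetric] mult.commute)
      finally show "0 \<le> V - (1 + t/a)^n * k" by simp
    qed
    also have "\<dots> \<le> (\<integral>\<^sup>+t. indicator {0..} t * emeasure lborel {x. t < Fp x} \<partial>lborel)"
    proof (rule nn_integral_mono)
      fix t :: real
      show "ennreal (V - (1 + t/a)^n * k) * indicator {0..a/real n} t \<le> indicator {0..} t * emeasure lborel {x. t < Fp x}"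
      proof (cases "t \<in> {0..a/real n}")
        case False then show ?thesis by simp
      next
        case True
        then have t0: "0 \<le> t" by simp
        define L where "L = {x\<in>P. \<phi> x \<le> t}"
        have LbL: "L \<in> sets borel" unfolding L_def by (rule Lb)
        have LP: "L \<subseteq> P" by (auto simp: L_def)
        define \<tau> where "\<tau> = t / (a + t)"
        have tau: "0 \<le> \<tau>" "\<tau> \<le> 1" using t0 a by (auto simp: \<tau>_def field_simps)
        have sub: "(\<lambda>v. (1 - \<tau>) *\<^sub>R v + \<tau> *\<^sub>R x0) ` L \<subseteq> K"
        proof
          fix y assume "y \<in> (\<lambda>v. (1 - \<tau>) *\<^sub>R v + \<tau> *\<^sub>R x0) ` L"
          then obtain v where v: "v \<in> L" "y = (1 - \<tau>) *\<^sub>R v + \<tau> *\<^sub>R x0" by auto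
          have vP: "v \<in> P" using v LP by auto
          have yP: "y \<in> P" using convexD[OF cP vP x0 _ tau(1)] tau v by auto
          have "\<phi> y \<le> (1 - \<tau>) * \<phi> v + \<tau> * \<phi> x0"
            using convex_onD[OF cvx tau vP x0] v by simp
          also have "\<dots> \<le> (1 - \<tau>) * t + \<tau> * (- a)"
            using v(1) tau ax by (auto simp: L_def intro!: mult_left_mono)
          also have "\<dots> = 0" using a t0 by (simp add: \<tau>_def field_simps)
          finally show "y \<in> K" using yP by (simp add: K_def)
        qed
        from scale_mono[OF Kb LbL sub]
        have "ennreal ((1 - \<tau>)^n) * emeasure lborel L \<le> ennreal k" using tau eK by (simp add: n_def)
        moreover have "emeasure lborel L = ennreal (measure lborel L)"
          using finsub[OF LP LbL] by (simp add: emeasure_eq_ennreal_measure)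
        ultimately have "ennreal ((1 - \<tau>)^n * measure lborel L) \<le> ennreal k" using tau by (simp add: ennreal_mult)
        then have mL1: "(1 - \<tau>)^n * measure lborel L \<le> k" using k0 by (simp add: ennreal_le_iff)
        have inv: "(1 + t/a) * (1 - \<tau>) = 1"
        proof -
          have "a + t > 0" using a t0 by simp
          have "1 + t/a = (a + t)/a" using a by (simp add: field_simps)
          moreover have "1 - \<tau> = a / (a + t)" using \<open>a + t > 0\<close> by (simp add: \<tau>_def field_simps)
          ultimately show ?thesis using a \<open>a + t > 0\<close> by simp
        qed
        have mL: "measure lborel L \<le> (1 + t/a)^n * k"
        proof -
          have "measure lborel L = (1 + t/a)^n * ((1 - \<tau>)^n * measure lborel L)"
            using inv by (simp add: mult.assoc[symmetric] power_mult_distrib[symmetric])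
          also have "\<dots> \<le> (1 + t/a)^n * k" using mL1 a t0 by (intro mult_left_mono) auto
          finally show ?thesis .
        qed
        have Sb: "{x. t < Fp x} \<in> sets borel" by measurable
        have SP: "{x. t < Fp x} \<subseteq> P" using t0 by (auto simp: Fp_def indicator_def split: if_splits)
        have DS: "P - L \<subseteq> {x. t < Fp x}" by (auto simp: L_def Fp_def)
        have "V - measure lborel L = measure lborel (P - L)"
          unfolding V_def using finP Pb LbL LP by (subst measure_Diff) auto
        also have "\<dots> \<le> measure lborel {x. t < Fp x}"
          using DS Pb LbL Sb finsub[OF SP Sb] by (intro measure_mono_fmeasurable) (auto intro: fmeasurableI)
        finally have "V - (1 + t/a)^n * k \<le> measure lborel {x. t < Fp x}" using mL by linarith
        then have "ennreal (V - (1 + t/a)^n * k) \<le> emeasure lborel {x. t < Fp x}"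
          using finsub[OF SP Sb] by (simp add: emeasure_eq_ennreal_measure ennreal_leI)
        then show ?thesis using True by simp
      qed
    qed
    also have "\<dots> = (\<integral>\<^sup>+x. ennreal (Fp x) \<partial>lborel)" by (rule layer_cake_gt[symmetric]) (use Fp_nn in auto)
    also have "\<dots> = ennreal (integral\<^sup>L lborel Fp)"
      by (rule nn_integral_eq_integral) (use intp' Fp_nn in auto)
    finally have "ennreal (a * V / real n - a * k * (Q - 1) / (real n + 1)) \<le> ennreal (integral\<^sup>L lborel Fp)" .
    moreover have "0 \<le> integral\<^sup>L lborel Fp" using Fp_nn by (simp add: integral_nonneg)
    ultimately show ?thesis by (simp add: ennreal_le_iff)
  qed

  have goal: "a * H * V / (real n + 1) \<le> integral\<^sup>L lborel Fn"
  proof (cases "H * V \<le> k")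
    case True
    have "a * H * V / (real n + 1) \<le> a * k / (real n + 1)"
      using True a by (simp add: divide_right_mono mult.assoc)
    then show ?thesis using A by linarith
  next
    case False
    then have kV: "k < H * V" by simp
    have Q1: "1 \<le> Q" unfolding Q_def using n1 by (intro one_le_power) simp
    have HQ': "H * Q = 1 + 1/real n"
      using HQ unfolding Q_def by (simp add: mult.assoc[symmetric])
    have i1: "a * k * (Q - 1) / (real n + 1) \<le> a * (H * V) * (Q - 1) / (real n + 1)"
      using kV a Q1 by (intro divide_right_mono mult_right_mono mult_left_mono) auto
    have gen: "N > 0 \<Longrightarrow> H * Q = 1 + 1/N \<Longrightarrow> a * V / N - a * (H * V) * (Q - 1) / (N + 1) = a * H * V / (N + 1)" for N :: real
    proof -
      assume N: "N > 0" "H * Q = 1 + 1/N"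
      have "a * (H * V) * (Q - 1) = a * V * (H * Q) - a * H * V" by (simp add: algebra_simps)
      also have "\<dots> = a * V * (1 + 1/N) - a * H * V" using N by simp
      finally have e: "a * (H * V) * (Q - 1) = a * V * (1 + 1/N) - a * H * V" .
      have N1: "N + 1 \<noteq> 0" using N by simp
      have g: "1 + 1/N = (N+1)/N" using N by (simp add: field_simps)
      have f: "a * V * (1 + 1/N) / (N + 1) = a * V / N"
      proof -
        have "N * N > 0" using N by simp
        then have "N + N * N \<noteq> 0" using N by linarith
        then show ?thesis unfolding g using N N1 by (simp add: field_simps)
      qed
      show ?thesis unfolding e diff_divide_distrib f by linarith
    qed
    have rn0: "real n > 0" using n1 by simp
    have aux: "\<And>X Y A Z::real. X \<le> Y \<Longrightarrow> A - Y = Z \<Longrightarrow> Z \<le> A - X" by linarith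
    from aux[OF i1 gen[OF rn0 HQ']]
    have "a * H * V / (real n + 1) \<le> a * V / real n - a * k * (Q - 1) / (real n + 1)" .
    then show ?thesis using B[OF kV] eq by (simp add: Fn_def Fp_def)
  qed
  then show ?thesis by (simp add: H_def V_def n_def Fn_def)
qed



lemma avg_lemma:
  fixes P :: "'a::euclidean_space set" and \<phi> :: "'a \<Rightarrow> real"
  assumes oP: "open P" and bP: "bounded P" and cont: "continuous_on P \<phi>"
    and si: "set_integrable lebesgue P \<phi>" and z: "(LINT x:P|lebesgue. \<phi> x) = 0"
  shows "integrable lborel (\<lambda>x. indicator P x * max 0 (- \<phi> x))"
    and "integrable lborel (\<lambda>x. indicator P x * max 0 (\<phi> x))"
    and "integral\<^sup>L lborel (\<lambda>x. indicator P x * max 0 (- \<phi> x)) = integral\<^sup>L lborel (\<lambda>x. indicator P x * max 0 (\<phi> x))"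
    and "avg_abs P \<phi> = 2 * integral\<^sup>L lborel (\<lambda>x. indicator P x * max 0 (- \<phi> x)) / measure lborel P"
    and "integrable lborel (\<lambda>x. indicator P x * \<phi> x)"
    and "integral\<^sup>L lborel (\<lambda>x. indicator P x * \<phi> x) = 0"
proof -
  have Pb: "P \<in> sets borel" using oP by simp
  define G where "G = (\<lambda>x. indicator P x *\<^sub>R \<phi> x)"
  have Gm: "G \<in> borel_measurable borel" unfolding G_def
    by (rule borel_measurable_continuous_on_indicator[OF Pb cont])
  then have Gm': "G \<in> borel_measurable lborel" by simp
  have iG: "integrable lborel G"
    using si integrable_completion[OF Gm'] unfolding set_integrable_def G_def by simp
  have zG: "integral\<^sup>L lborel G = 0"
    using z integral_completion[OF Gm'] unfolding set_lebesgue_integral_def G_def by simp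
  have eqn: "indicator P x * max 0 (- \<phi> x) = max 0 (- G x)" for x
    by (auto simp: G_def indicator_def)
  have eqp: "indicator P x * max 0 (\<phi> x) = max 0 (G x)" for x
    by (auto simp: G_def indicator_def)
  have iN: "integrable lborel (\<lambda>x. max 0 (- G x))" using iG by auto
  have iP: "integrable lborel (\<lambda>x. max 0 (G x))" using iG by auto
  show i1: "integrable lborel (\<lambda>x. indicator P x * max 0 (- \<phi> x))" unfolding eqn by (rule iN)
  show i2: "integrable lborel (\<lambda>x. indicator P x * max 0 (\<phi> x))" unfolding eqp by (rule iP)
  show "integrable lborel (\<lambda>x. indicator P x * \<phi> x)" using iG by (simp add: G_def)
  show "integral\<^sup>L lborel (\<lambda>x. indicator P x * \<phi> x) = 0" using zG by (simp add: G_def)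
  have "G x = max 0 (G x) - max 0 (- G x)" for x by auto
  then have "integral\<^sup>L lborel G = integral\<^sup>L lborel (\<lambda>x. max 0 (G x) - max 0 (- G x))" by simp
  also have "\<dots> = integral\<^sup>L lborel (\<lambda>x. max 0 (G x)) - integral\<^sup>L lborel (\<lambda>x. max 0 (- G x))"
    by (rule Bochner_Integration.integral_diff[OF iP iN])
  finally have e: "integral\<^sup>L lborel (\<lambda>x. max 0 (- G x)) = integral\<^sup>L lborel (\<lambda>x. max 0 (G x))" using zG by simp
  then show "integral\<^sup>L lborel (\<lambda>x. indicator P x * max 0 (- \<phi> x)) = integral\<^sup>L lborel (\<lambda>x. indicator P x * max 0 (\<phi> x))"
    unfolding eqn eqp .
  have Am: "(\<lambda>x. indicator P x *\<^sub>R \<bar>\<phi> x\<bar>) \<in> borel_measurable lborel"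
    using borel_measurable_continuous_on_indicator[OF Pb continuous_on_rabs[OF cont]] by simp
  have "(LINT x:P|lebesgue. \<bar>\<phi> x\<bar>) = integral\<^sup>L lborel (\<lambda>x. indicator P x *\<^sub>R \<bar>\<phi> x\<bar>)"
    unfolding set_lebesgue_integral_def by (rule integral_completion[OF Am])
  also have "\<dots> = integral\<^sup>L lborel (\<lambda>x. max 0 (- G x) + max 0 (G x))"
    by (rule Bochner_Integration.integral_cong) (auto simp: G_def indicator_def)
  also have "\<dots> = integral\<^sup>L lborel (\<lambda>x. max 0 (- G x)) + integral\<^sup>L lborel (\<lambda>x. max 0 (G x))"
    by (rule Bochner_Integration.integral_add[OF iN iP])
  finally have "(LINT x:P|lebesgue. \<bar>\<phi> x\<bar>) = 2 * integral\<^sup>L lborel (\<lambda>x. indicator P x * max 0 (- \<phi> x))"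
    using e unfolding eqn by simp
  moreover have "measure lebesgue P = measure lborel P" using Pb by simp
  ultimately show "avg_abs P \<phi> = 2 * integral\<^sup>L lborel (\<lambda>x. indicator P x * max 0 (- \<phi> x)) / measure lborel P"
    by (simp add: avg_abs_def)
qed



lemma part1:
  fixes P :: "'a::euclidean_space set" and \<phi> :: "'a \<Rightarrow> real"
  assumes adm: "admissible P \<phi>"
  shows "- (2 / (real DIM('a) + 1)) * (real DIM('a) / (real DIM('a) + 1)) ^ DIM('a) * Inf (\<phi> ` P) \<le> avg_abs P \<phi>
      \<and> avg_abs P \<phi> \<le> - 2 * Inf (\<phi> ` P)"
proof -
  have bP: "bounded P" and oP: "open P" and cP: "convex P" and ne: "P \<noteq> {}" and cvx: "convex_on P \<phi>"
    and si: "set_integrable lebesgue P \<phi>" and z: "(LINT x:P|lebesgue. \<phi> x) = 0"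
    using adm by (auto simp: admissible_def)
  have cont: "continuous_on P \<phi>" using convex_on_continuous[OF oP cvx] .
  note AL = avg_lemma[OF oP bP cont si z]
  define In where "In = integral\<^sup>L lborel (\<lambda>x. indicator P x * max 0 (- \<phi> x))"
  define V where "V = measure lborel P"
  define N where "N = real DIM('a)"
  define H where "H = (N / (N + 1)) ^ DIM('a)"
  define c where "c = 2 / (N + 1) * H"
  have N0: "N > 0" unfolding N_def by simp
  have H0: "H > 0" unfolding H_def using N0 by simp
  have c0: "c > 0" unfolding c_def using N0 H0 by simp
  have avg: "avg_abs P \<phi> = 2 * In / V" using AL(4) by (simp add: In_def V_def)
  have Pb: "P \<in> sets borel" using oP by simp
  have finP: "emeasure lborel P < \<infinity>" using bP by (rule emeasure_bounded_finite)
  have V0: "V > 0"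
  proof -
    obtain x where "x \<in> P" using ne by auto
    then obtain e where e: "e > 0" "ball x e \<subseteq> P" using oP openE by blast
    have "0 < measure lborel (ball x e)" using e by simp
    also have "\<dots> \<le> V" unfolding V_def
      using e Pb finP by (intro measure_mono_fmeasurable) (auto intro: fmeasurableI)
    finally show ?thesis .
  qed
  have In0: "0 \<le> In" unfolding In_def by (simp add: integral_nonneg)
  have avg0: "0 \<le> avg_abs P \<phi>" using avg In0 V0 by simp
  have key: "- c * \<phi> x \<le> avg_abs P \<phi>" if xP: "x \<in> P" for x
  proof (cases "\<phi> x \<ge> 0")
    case True
    then have "0 \<le> c * \<phi> x" using c0 by simp
    then show ?thesis using avg0 by linarith
  next
    case False
    define a where "a = - \<phi> x"
    have a0: "a > 0" using False by (simp add: a_def)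
    have "a * H * V / (N + 1) \<le> In"
      using core[OF oP cP bP cvx xP _ a0 AL(1) AL(2) AL(3)] by (simp add: a_def H_def N_def V_def In_def)
    then have "2 * (a * H * V / (N + 1)) / V \<le> 2 * In / V" using V0 by (intro divide_right_mono mult_left_mono) auto
    moreover have "2 * (a * H * V / (N + 1)) / V = c * a" using V0 by (simp add: c_def)
    ultimately show ?thesis using avg by (simp add: a_def)
  qed
  have lbx: "(- avg_abs P \<phi>) / c \<le> \<phi> x" if "x \<in> P" for x
  proof -
    have "- avg_abs P \<phi> \<le> \<phi> x * c" using key[OF that] by (simp add: mult.commute)
    then show ?thesis by (subst pos_divide_le_eq[OF c0])
  qed
  have bdd: "bdd_below (\<phi> ` P)" unfolding bdd_below_def using lbx by blast
  have "(- avg_abs P \<phi>) / c \<le> Inf (\<phi> ` P)" using ne lbx by (intro cInf_greatest) auto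
  then have "- avg_abs P \<phi> \<le> Inf (\<phi> ` P) * c" by (subst (asm) pos_divide_le_eq[OF c0])
  then have lower: "- c * Inf (\<phi> ` P) \<le> avg_abs P \<phi>" by (simp add: mult.commute)
  have infle: "Inf (\<phi> ` P) \<le> \<phi> x" if "x \<in> P" for x using bdd that by (auto intro: cInf_lower)
  define m where "m = Inf (\<phi> ` P)"
  have iI: "integrable lborel (\<lambda>x. m * indicator P x)"
    using Pb finP by (intro integrable_mult_right integrable_real_indicator) auto
  have intI: "integral\<^sup>L lborel (\<lambda>x. m * indicator P x) = m * V" by (simp add: V_def)
  have "m * V \<le> integral\<^sup>L lborel (\<lambda>x. indicator P x * \<phi> x)"
    unfolding intI[symmetric] using iI AL(5)
    by (intro integral_mono) (auto simp: indicator_def m_def infle)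
  then have "m * V \<le> 0" using AL(6) by simp
  then have m0: "m \<le> 0" using V0 by (simp add: mult_le_0_iff)
  have iI': "integrable lborel (\<lambda>x. (- m) * indicator P x)"
    using Pb finP by (intro integrable_mult_right integrable_real_indicator) auto
  have "In \<le> integral\<^sup>L lborel (\<lambda>x. (- m) * indicator P x)"
    unfolding In_def using iI' AL(1) m0
    by (intro integral_mono) (auto simp: indicator_def m_def infle)
  also have "\<dots> = - m * V" by (simp add: V_def)
  finally have "In \<le> - m * V" .
  then have "2 * In / V \<le> 2 * (- m * V) / V" using V0 by (intro divide_right_mono mult_left_mono) auto
  then have upper: "avg_abs P \<phi> \<le> - 2 * m" using V0 avg by simp
  show ?thesis using lower upper unfolding c_def H_def N_def m_def by simp
qed



lemma ball_int:
  fixes f :: "'a::euclidean_space \<Rightarrow> real"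
  assumes "continuous_on (cball 0 1) f"
  shows "integrable lborel (\<lambda>x. indicator (ball (0::'a) 1) x * f x)"
    and "set_integrable lebesgue (ball (0::'a) 1) f"
proof -
  have "integrable lborel (\<lambda>x. indicator (cball (0::'a) 1) x *\<^sub>R f x)"
    by (rule borel_integrable_compact) (auto simp: assms)
  then have "set_integrable lborel (cball (0::'a) 1) f" by (simp add: set_integrable_def)
  then have si: "set_integrable lborel (ball (0::'a) 1) f" by (rule set_integrable_subset) auto
  then show "integrable lborel (\<lambda>x. indicator (ball (0::'a) 1) x * f x)" by (simp add: set_integrable_def)
  have m: "(\<lambda>x. indicator (ball (0::'a) 1) x *\<^sub>R f x) \<in> borel_measurable lborel"
    using borel_measurable_continuous_on_indicator[of "ball (0::'a) 1" f]
      continuous_on_subset[OF assms ball_subset_cball] by simp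
  show "set_integrable lebesgue (ball (0::'a) 1) f"
    using si integrable_completion[OF m] by (simp add: set_integrable_def)
qed

lemma ftc_C:
  fixes w :: real and N :: nat
  shows "((\<lambda>t. w * (1 - t^N)) has_integral (w * (real N / (real N + 1)))) {0..1}"
proof -
  define G where "G t = w * t - (w / (real N + 1)) * t^(N+1)" for t :: real
  have "((\<lambda>t. w * (1 - t^N)) has_integral (G 1 - G 0)) {0..1}"
  proof (rule fundamental_theorem_of_calculus)
    show "(0::real) \<le> 1" by simp
    fix t :: real assume "t \<in> {0..1}"
    have d: "((\<lambda>t. t^(N+1)) has_real_derivative ((real N + 1) * t^N)) (at t within {0..1})"
      apply (auto intro!: derivative_eq_intros)
      unfolding pow_aux by (simp add: algebra_simps)
    have e: "w * 1 - (w / (real N + 1)) * ((real N + 1) * t^N) = w * (1 - t^N)"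
    proof -
      have "m > 0 \<Longrightarrow> w * 1 - (w / m) * (m * X) = w * (1 - X)" for m X :: real
        by (simp add: field_simps)
      moreover have "real N + 1 > 0" by simp
      ultimately show ?thesis by blast
    qed
    have "(G has_real_derivative w * 1 - (w / (real N + 1)) * ((real N + 1) * t^N)) (at t within {0..1})"
      unfolding G_def by (intro derivative_intros DERIV_cmult d)
    then have "(G has_real_derivative w * (1 - t^N)) (at t within {0..1})" unfolding e .
    then show "(G has_vector_derivative w * (1 - t^N)) (at t within {0..1})"
      by (simp add: has_real_derivative_iff_has_vector_derivative)
  qed
  moreover have "G 1 - G 0 = w * (real N / (real N + 1))"
  proof -
    have "m > 0 \<Longrightarrow> w * 1 - w / m * 1 - 0 = w * ((m - 1) / m)" for m :: real
      by (simp add: field_simps)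
    moreover have "real N + 1 > 0" by simp
    ultimately show ?thesis unfolding G_def by fastforce
  qed
  ultimately show ?thesis by simp
qed

lemma ball_norm_integral:
  "integral\<^sup>L lborel (\<lambda>x. indicator (ball (0::'a::euclidean_space) 1) x * norm x)
     = unit_ball_vol (DIM('a)) * (real DIM('a) / (real DIM('a) + 1))"
proof -
  define B where "B = ball (0::'a) 1"
  define w where "w = unit_ball_vol (DIM('a))"
  define f where "f = (\<lambda>x. indicator B x * norm x)"
  have w0: "0 \<le> w" unfolding w_def
    using emeasure_ball[of 1 "0::'a"] content_ball[of 1 "0::'a"] measure_nonneg[of lborel "ball (0::'a) 1"] by simp
  have "(\<lambda>x. indicator B x *\<^sub>R norm x) \<in> borel_measurable borel"
    by (rule borel_measurable_continuous_on_indicator) (auto simp: B_def intro: continuous_on_norm_id)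
  then have fm: "f \<in> borel_measurable borel" by (simp add: f_def)
  have fnn: "\<And>x. 0 \<le> f x" by (simp add: f_def)
  have intf: "integrable lborel f" unfolding f_def B_def by (rule ball_int) (intro continuous_intros)
  have "ennreal (w * (real DIM('a) / (real DIM('a) + 1))) =
      (\<integral>\<^sup>+t. ennreal (w * (1 - t^DIM('a))) * indicator {0..1} t \<partial>lborel)"
  proof (rule nn_integral_has_integral_lebesgue'[symmetric])
    show "((\<lambda>t. w * (1 - t^DIM('a))) has_integral (w * (real DIM('a) / (real DIM('a) + 1)))) {0..1}"
      by (rule ftc_C)
    fix t :: real assume "t \<in> {0..1}"
    then have "t^DIM('a) \<le> 1" by (simp add: power_le_one)
    then show "0 \<le> w * (1 - t^DIM('a))" using w0 by simp
  qed
  also have "\<dots> = (\<integral>\<^sup>+t. indicator {0..} t * emeasure lborel {x. t < f x} \<partial>lborel)"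
  proof (rule nn_integral_cong)
    fix t :: real
    show "ennreal (w * (1 - t^DIM('a))) * indicator {0..1} t = indicator {0..} t * emeasure lborel {x. t < f x}"
    proof (cases "0 \<le> t")
      case False
      then show ?thesis by simp
    next
      case t0: True
      have S: "{x. t < f x} = B - cball 0 t" using t0 by (auto simp: f_def B_def indicator_def)
      show ?thesis
      proof (cases "t < 1")
        case True
        have sub: "cball (0::'a) t \<subseteq> B" using True by (auto simp: B_def)
        have "emeasure lborel (B - cball 0 t) = emeasure lborel B - emeasure lborel (cball (0::'a) t)"
          using sub by (intro emeasure_Diff) (auto simp: B_def emeasure_cball t0)
        also have "\<dots> = ennreal w - ennreal (w * t^DIM('a))"
          using t0 by (simp add: B_def emeasure_ball emeasure_cball w_def)
        also have "\<dots> = ennreal (w * (1 - t^DIM('a)))"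
          using t0 w0 by (simp add: ennreal_minus right_diff_distrib)
        finally show ?thesis using S t0 True by simp
      next
        case False
        then have E: "B - cball 0 t = {}" by (auto simp: B_def)
        have "ennreal (w * (1 - t^DIM('a))) * indicator {0..1} t = 0"
          using False by (cases "t = 1") auto
        then show ?thesis unfolding S E by simp
      qed
    qed
  qed
  also have "\<dots> = (\<integral>\<^sup>+x. ennreal (f x) \<partial>lborel)" by (rule layer_cake_gt[symmetric, OF fm fnn])
  also have "\<dots> = ennreal (integral\<^sup>L lborel f)" by (rule nn_integral_eq_integral) (use intf fnn in auto)
  finally have "ennreal (w * (real DIM('a) / (real DIM('a) + 1))) = ennreal (integral\<^sup>L lborel f)" .
  moreover have "0 \<le> integral\<^sup>L lborel f" using fnn by (simp add: integral_nonneg)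
  moreover have "0 \<le> w * (real DIM('a) / (real DIM('a) + 1))" using w0 by simp
  ultimately show ?thesis unfolding f_def B_def w_def by simp
qed

lemma ball_cone_integral:
  assumes r: "0 < \<rho>" "\<rho> \<le> 1"
  shows "integral\<^sup>L lborel (\<lambda>x. indicator (ball (0::'a::euclidean_space) 1) x * max 0 (\<rho> - norm x))
     = unit_ball_vol (DIM('a)) * \<rho>^(DIM('a)+1) / (real DIM('a) + 1)"
proof -
  define B where "B = ball (0::'a) 1"
  define w where "w = unit_ball_vol (DIM('a))"
  define f where "f = (\<lambda>x. indicator B x * max 0 (\<rho> - norm x))"
  have w0: "0 \<le> w" unfolding w_def
    using emeasure_ball[of 1 "0::'a"] content_ball[of 1 "0::'a"] measure_nonneg[of lborel "ball (0::'a) 1"] by simp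
  have fm: "f \<in> borel_measurable borel"
  proof -
    have "continuous_on B (\<lambda>x. max 0 (\<rho> - norm x))" by (intro continuous_intros)
    from borel_measurable_continuous_on_indicator[OF _ this] show ?thesis
      unfolding f_def B_def by simp
  qed
  have fnn: "\<And>x. 0 \<le> f x" by (simp add: f_def)
  have intf: "integrable lborel f" unfolding f_def B_def by (rule ball_int) (intro continuous_intros)
  define k where "k = w * \<rho>^DIM('a)"
  have k0: "0 \<le> k" using w0 r by (simp add: k_def)
  have "ennreal (\<rho> * k / (real DIM('a) + 1)) =
      (\<integral>\<^sup>+t. ennreal ((1 - t/\<rho>)^DIM('a) * k) * indicator {0..\<rho>} t \<partial>lborel)"
  proof (rule nn_integral_has_integral_lebesgue'[symmetric])
    show "((\<lambda>t. (1 - t/\<rho>)^DIM('a) * k) has_integral (\<rho> * k / (real DIM('a) + 1))) {0..\<rho>}"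
      by (rule ftc_A[OF r(1)])
    fix t :: real assume "t \<in> {0..\<rho>}"
    then have "0 \<le> 1 - t/\<rho>" using r by (auto simp: field_simps)
    then show "0 \<le> (1 - t/\<rho>)^DIM('a) * k" using k0 by simp
  qed
  also have "\<dots> = (\<integral>\<^sup>+t. indicator {0..} t * emeasure lborel {x. t < f x} \<partial>lborel)"
  proof (rule nn_integral_cong)
    fix t :: real
    show "ennreal ((1 - t/\<rho>)^DIM('a) * k) * indicator {0..\<rho>} t = indicator {0..} t * emeasure lborel {x. t < f x}"
    proof (cases "0 \<le> t")
      case False
      then show ?thesis by simp
    next
      case t0: True
      have S: "{x. t < f x} = ball 0 (\<rho> - t)" using t0 r by (auto simp: f_def B_def indicator_def)
      show ?thesis
      proof (cases "t \<le> \<rho>")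
        case True
        have "(1 - t/\<rho>)^DIM('a) * k = w * (\<rho> - t)^DIM('a)"
        proof -
          have "(1 - t/\<rho>) * \<rho> = \<rho> - t" using r by (simp add: field_simps)
          then have "(1 - t/\<rho>)^DIM('a) * \<rho>^DIM('a) = (\<rho> - t)^DIM('a)"
            by (metis power_mult_distrib)
          then show ?thesis unfolding k_def by (simp add: algebra_simps)
        qed
        moreover have "emeasure lborel (ball (0::'a) (\<rho> - t)) = ennreal (w * (\<rho> - t)^DIM('a))"
          using True by (simp add: emeasure_ball w_def)
        ultimately show ?thesis using S t0 True by simp
      next
        case False
        then have E: "ball (0::'a) (\<rho> - t) = {}" by auto
        show ?thesis unfolding S E using False by simp
      qed
    qed
  qed
  also have "\<dots> = (\<integral>\<^sup>+x. ennreal (f x) \<partial>lborel)" by (rule layer_cake_gt[symmetric, OF fm fnn])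
  also have "\<dots> = ennreal (integral\<^sup>L lborel f)" by (rule nn_integral_eq_integral) (use intf fnn in auto)
  finally have "ennreal (\<rho> * k / (real DIM('a) + 1)) = ennreal (integral\<^sup>L lborel f)" .
  moreover have "0 \<le> integral\<^sup>L lborel f" using fnn by (simp add: integral_nonneg)
  moreover have "0 \<le> \<rho> * k / (real DIM('a) + 1)" using k0 r by simp
  ultimately have "integral\<^sup>L lborel f = \<rho> * k / (real DIM('a) + 1)" by simp
  then show ?thesis unfolding f_def B_def k_def w_def by (simp add: algebra_simps)
qed



lemma convex_on_maxnorm:
  fixes r :: real
  shows "convex_on (ball (0::'a::euclidean_space) 1) (\<lambda>x. max 0 (norm x - r))"
proof (rule convex_onI)
  show "convex (ball (0::'a) 1)" by simp
  fix t :: real and x y :: 'a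
  assume t: "0 < t" "t < 1"
  have nz: "norm ((1 - t) *\<^sub>R x + t *\<^sub>R y) \<le> (1 - t) * norm x + t * norm y"
    using norm_triangle_ineq[of "(1 - t) *\<^sub>R x" "t *\<^sub>R y"] t by simp
  have A: "(1 - t) * (norm x - r) \<le> (1 - t) * max 0 (norm x - r)" using t by (intro mult_left_mono) auto
  have B: "t * (norm y - r) \<le> t * max 0 (norm y - r)" using t by (intro mult_left_mono) auto
  have C: "0 \<le> (1 - t) * max 0 (norm x - r)" "0 \<le> t * max 0 (norm y - r)" using t by auto
  have "norm ((1 - t) *\<^sub>R x + t *\<^sub>R y) - r \<le> (1 - t) * (norm x - r) + t * (norm y - r)"
    using nz by (simp add: algebra_simps)
  then show "max 0 (norm ((1 - t) *\<^sub>R x + t *\<^sub>R y) - r) \<le> (1 - t) * max 0 (norm x - r) + t * max 0 (norm y - r)"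
    using A B C by linarith
qed

lemma ball_basic:
  shows "measure lborel (ball (0::'a::euclidean_space) 1) = unit_ball_vol (DIM('a))"
    and "0 < unit_ball_vol (DIM('a))"
proof -
  show m: "measure lborel (ball (0::'a::euclidean_space) 1) = unit_ball_vol (DIM('a))"
    using content_ball[of 1 "0::'a"] by simp
  have "0 < measure lborel (ball (0::'a::euclidean_space) 1)" by simp
  then show "0 < unit_ball_vol (DIM('a))" using m by simp
qed

lemma lebesgue_int_ball:
  fixes f :: "'a::euclidean_space \<Rightarrow> real"
  assumes "continuous_on (cball 0 1) f"
  shows "(LINT x:ball (0::'a) 1|lebesgue. f x) = integral\<^sup>L lborel (\<lambda>x. indicator (ball (0::'a) 1) x * f x)"
proof -
  have m: "(\<lambda>x. indicator (ball (0::'a) 1) x *\<^sub>R f x) \<in> borel_measurable lborel"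
    using borel_measurable_continuous_on_indicator[of "ball (0::'a) 1" f]
      continuous_on_subset[OF assms ball_subset_cball] by simp
  show ?thesis unfolding set_lebesgue_integral_def using integral_completion[OF m] by simp
qed

lemma part2:
  fixes c :: real
  assumes c: "c > (2 / (real DIM('a) + 1)) * (real DIM('a) / (real DIM('a) + 1)) ^ DIM('a)"
  shows "\<exists>(P::'a::euclidean_space set) \<phi>. admissible P \<phi> \<and> \<not> (- c * Inf (\<phi> ` P) \<le> avg_abs P \<phi>)"
proof -
  define N where "N = real DIM('a)"
  define h where "h = N / (N + 1)"
  define B where "B = ball (0::'a) 1"
  define w where "w = unit_ball_vol (DIM('a))"
  define \<phi> where "\<phi> = (\<lambda>x::'a. norm x - h)"
  have N0: "N > 0" by (simp add: N_def)
  have h0: "0 < h" "h \<le> 1" using N0 by (auto simp: h_def)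
  have w0: "0 < w" using ball_basic(2) by (simp add: w_def)
  have mB: "measure lborel B = w" using ball_basic(1) by (simp add: B_def w_def)
  have contc: "continuous_on (cball 0 1) \<phi>" unfolding \<phi>_def by (intro continuous_intros)
  note BI = ball_int[OF contc]
  have i1: "integrable lborel (\<lambda>x. indicator B x * norm x)" unfolding B_def by (rule ball_int) (intro continuous_intros)
  have i2: "integrable lborel (\<lambda>x. h * indicator B x)"
    by (intro integrable_mult_right integrable_real_indicator) (auto simp: B_def emeasure_ball)
  have "integral\<^sup>L lborel (\<lambda>x. indicator B x * \<phi> x) = integral\<^sup>L lborel (\<lambda>x. indicator B x * norm x - h * indicator B x)"
    by (rule Bochner_Integration.integral_cong) (auto simp: \<phi>_def indicator_def)
  also have "\<dots> = integral\<^sup>L lborel (\<lambda>x. indicator B x * norm x) - integral\<^sup>L lborel (\<lambda>x. h * indicator B x)"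
    by (rule Bochner_Integration.integral_diff[OF i1 i2])
  also have "\<dots> = w * h - h * w"
    using ball_norm_integral[where 'a='a] mB by (simp add: B_def w_def h_def N_def)
  finally have z0: "integral\<^sup>L lborel (\<lambda>x. indicator B x * \<phi> x) = 0" by simp
  have z: "(LINT x:B|lebesgue. \<phi> x) = 0" using lebesgue_int_ball[OF contc] z0 by (simp add: B_def)
  have cvx: "convex_on B \<phi>"
  proof -
    have "convex_on B (\<lambda>x. dist 0 x + (- h))"
      by (intro convex_on_add convex_on_dist) (auto simp: B_def convex_on_const)
    then show ?thesis unfolding \<phi>_def by (simp add: dist_norm)
  qed
  have adm: "admissible B \<phi>"
    unfolding admissible_def using BI(2) z cvx by (auto simp: B_def)
  have contB: "continuous_on B \<phi>" unfolding \<phi>_def by (intro continuous_intros)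
  have avg: "avg_abs B \<phi> = 2 * integral\<^sup>L lborel (\<lambda>x. indicator B x * max 0 (- \<phi> x)) / w"
    using avg_lemma(4)[OF _ _ contB, of] adm mB unfolding admissible_def by auto
  have "integral\<^sup>L lborel (\<lambda>x. indicator B x * max 0 (- \<phi> x)) = w * h^(DIM('a)+1) / (N + 1)"
    using ball_cone_integral[OF h0, where 'a='a] by (simp add: \<phi>_def B_def w_def N_def)
  then have avg2: "avg_abs B \<phi> = 2 * h^(DIM('a)+1) / (N + 1)" using avg w0 by simp
  have inf: "Inf (\<phi> ` B) = - h"
  proof (rule cInf_eq_minimum)
    show "- h \<in> \<phi> ` B" by (rule image_eqI[of _ _ 0]) (auto simp: \<phi>_def B_def)
    fix y assume "y \<in> \<phi> ` B" then show "- h \<le> y" by (auto simp: \<phi>_def)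
  qed
  have "2 * h^(DIM('a)+1) / (N + 1) = ((2 / (N + 1)) * h ^ DIM('a)) * h" by simp
  also have "\<dots> < c * h" using c h0 by (intro mult_strict_right_mono) (auto simp: h_def N_def)
  finally have "\<not> (- c * Inf (\<phi> ` B) \<le> avg_abs B \<phi>)" using avg2 inf by simp
  then show ?thesis using adm by blast
qed



lemma part3:
  fixes c :: real
  assumes c: "c < 2"
  shows "\<exists>(P::'a::euclidean_space set) \<phi>. admissible P \<phi> \<and> \<not> (avg_abs P \<phi> \<le> - c * Inf (\<phi> ` P))"
proof -
  define n where "n = DIM('a)"
  define N where "N = real n"
  define h where "h = N / (N + 1)"
  define B where "B = ball (0::'a) 1"
  define w where "w = unit_ball_vol (DIM('a))"
  define q where "q = max 0 c / 2"
  define r where "r = root n ((1 + q) / 2)"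
  have n0: "0 < n" by (simp add: n_def)
  have N0: "N > 0" by (simp add: N_def n_def)
  have q01: "0 \<le> q" "q < 1" using c by (auto simp: q_def)
  have rn: "r ^ n = (1 + q) / 2" using n0 q01 by (simp add: r_def)
  have r0: "0 < r" using n0 q01 by (simp add: r_def)
  have r1: "r < 1" using n0 q01 by (simp add: r_def)
  have w0: "0 < w" using ball_basic(2) by (simp add: w_def)
  have mB: "measure lborel B = w" using ball_basic(1) by (simp add: B_def w_def)
  define J where "J = integral\<^sup>L lborel (\<lambda>x. indicator B x * max 0 (norm x - r))"
  have i1: "integrable lborel (\<lambda>x. indicator B x * norm x)" unfolding B_def by (rule ball_int) (intro continuous_intros)
  have i2: "integrable lborel (\<lambda>x. r * indicator B x)"
    by (intro integrable_mult_right integrable_real_indicator) (auto simp: B_def emeasure_ball)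
  have i3: "integrable lborel (\<lambda>x. indicator B x * max 0 (r - norm x))" unfolding B_def by (rule ball_int) (intro continuous_intros)
  have "J = integral\<^sup>L lborel (\<lambda>x. (indicator B x * norm x - r * indicator B x) + indicator B x * max 0 (r - norm x))"
    unfolding J_def by (rule Bochner_Integration.integral_cong) (auto simp: indicator_def)
  also have "\<dots> = (integral\<^sup>L lborel (\<lambda>x. indicator B x * norm x) - integral\<^sup>L lborel (\<lambda>x. r * indicator B x))
       + integral\<^sup>L lborel (\<lambda>x. indicator B x * max 0 (r - norm x))"
    using i1 i2 i3 by (simp add: Bochner_Integration.integral_diff Bochner_Integration.integral_add)
  also have "\<dots> = w * h - r * w + w * r^(n+1) / (N + 1)"
    using ball_norm_integral[where 'a='a] ball_cone_integral[OF r0 less_imp_le[OF r1], where 'a='a] mB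
    by (simp add: B_def w_def h_def N_def n_def)
  finally have Jeq: "J = w * h - r * w + w * r^(n+1) / (N + 1)" .
  have J0: "J > 0"
  proof -
    have "1 + N * (r - 1) \<le> (1 + (r - 1))^n" unfolding N_def using r0 by (intro Bernoulli_inequality) simp
    then have b: "1 + N * (r - 1) \<le> r^n" by simp
    have "r * (1 + N * (r - 1)) \<le> r * r^n" using b r0 by (intro mult_left_mono) auto
    then have "N * (1 - r)^2 \<le> N - (N + 1) * r + r^(n+1)" by (simp add: power2_eq_square algebra_simps)
    moreover have "0 < N * (1 - r)^2" using N0 r1 by simp
    ultimately have pos: "0 < N - (N + 1) * r + r^(n+1)" by linarith
    have "J = w * (N - (N + 1) * r + r^(n+1)) / (N + 1)"
    proof -
      have "m > 0 \<Longrightarrow> w * (Nn / m) - r * w + w * R / m = w * (Nn - m * r + R) / m" for m Nn R :: real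
        by (simp add: field_simps)
      moreover have "N + 1 > 0" using N0 by simp
      ultimately show ?thesis unfolding Jeq h_def by blast
    qed
    then show ?thesis using pos w0 N0 by simp
  qed
  define \<kappa> where "\<kappa> = w / J"
  have k0: "\<kappa> > 0" using w0 J0 by (simp add: \<kappa>_def)
  define \<phi> where "\<phi> = (\<lambda>x::'a. \<kappa> * max 0 (norm x - r) - 1)"
  have contc: "continuous_on (cball 0 1) \<phi>" unfolding \<phi>_def by (intro continuous_intros)
  note BI = ball_int[OF contc]
  have i4: "integrable lborel (\<lambda>x. indicator B x * max 0 (norm x - r))" unfolding B_def by (rule ball_int) (intro continuous_intros)
  have i5: "integrable lborel (indicator B :: 'a \<Rightarrow> real)"
    by (intro integrable_real_indicator) (auto simp: B_def emeasure_ball)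
  have "integral\<^sup>L lborel (\<lambda>x. indicator B x * \<phi> x) = integral\<^sup>L lborel (\<lambda>x. \<kappa> * (indicator B x * max 0 (norm x - r)) - indicator B x)"
    by (rule Bochner_Integration.integral_cong) (auto simp: \<phi>_def indicator_def)
  also have "\<dots> = \<kappa> * J - w"
    using i4 i5 mB by (simp add: Bochner_Integration.integral_diff J_def)
  also have "\<dots> = 0" using J0 by (simp add: \<kappa>_def)
  finally have z0: "integral\<^sup>L lborel (\<lambda>x. indicator B x * \<phi> x) = 0" .
  have z: "(LINT x:B|lebesgue. \<phi> x) = 0" using lebesgue_int_ball[OF contc] z0 by (simp add: B_def)
  have cvx: "convex_on B \<phi>"
  proof -
    have "convex_on B (\<lambda>x. \<kappa> * max 0 (norm x - r) + (- 1))"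
      using k0 by (intro convex_on_add convex_on_cmul) (auto simp: B_def convex_on_const convex_on_maxnorm)
    then show ?thesis unfolding \<phi>_def by simp
  qed
  have adm: "admissible B \<phi>"
    unfolding admissible_def using BI(2) z cvx by (auto simp: B_def)
  have contB: "continuous_on B \<phi>" unfolding \<phi>_def by (intro continuous_intros)
  have avg: "avg_abs B \<phi> = 2 * integral\<^sup>L lborel (\<lambda>x. indicator B x * max 0 (- \<phi> x)) / w"
    using avg_lemma(4)[OF _ _ contB, of] adm mB unfolding admissible_def by auto
  have iN: "integrable lborel (\<lambda>x. indicator B x * max 0 (- \<phi> x))"
    using avg_lemma(1)[OF _ _ contB, of] adm unfolding admissible_def by auto
  have i6: "integrable lborel (indicator (ball (0::'a) r) :: 'a \<Rightarrow> real)"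
    using r0 by (intro integrable_real_indicator) (auto simp: emeasure_ball)
  have "w * r^n = integral\<^sup>L lborel (indicator (ball (0::'a) r) :: 'a \<Rightarrow> real)"
    using content_ball[of r "0::'a"] r0 by (simp add: w_def n_def)
  also have "\<dots> \<le> integral\<^sup>L lborel (\<lambda>x. indicator B x * max 0 (- \<phi> x))"
  proof (rule integral_mono[OF i6 iN])
    fix x :: 'a
    show "indicator (ball 0 r) x \<le> indicator B x * max 0 (- \<phi> x)"
    proof (cases "norm x < r")
      case True
      then have "x \<in> B" using r1 by (simp add: B_def)
      moreover have "\<phi> x = -1" using True by (simp add: \<phi>_def)
      ultimately show ?thesis using True by simp
    next
      case False
      then show ?thesis by (simp add: indicator_def)
    qed
  qed
  finally have I: "w * r^n \<le> integral\<^sup>L lborel (\<lambda>x. indicator B x * max 0 (- \<phi> x))" .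
  have "w * avg_abs B \<phi> = 2 * integral\<^sup>L lborel (\<lambda>x. indicator B x * max 0 (- \<phi> x))"
    using avg w0 by simp
  then have "w * (2 * r^n) \<le> w * avg_abs B \<phi>" using I by linarith
  then have "2 * r^n \<le> avg_abs B \<phi>" using w0 by (simp add: mult_le_cancel_left_pos)
  then have avgq: "1 + q \<le> avg_abs B \<phi>" using rn by simp
  have inf: "Inf (\<phi> ` B) = - 1"
  proof (rule cInf_eq_minimum)
    show "- 1 \<in> \<phi> ` B" by (rule image_eqI[of _ _ 0]) (use r0 in \<open>auto simp: \<phi>_def B_def\<close>)
    fix y assume "y \<in> \<phi> ` B" then show "- 1 \<le> y" using k0 by (auto simp: \<phi>_def)
  qed
  have "c < 1 + q" using c by (auto simp: q_def)
  then have "\<not> (avg_abs B \<phi> \<le> - c * Inf (\<phi> ` B))" using avgq inf by simp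
  then show ?thesis using adm by blast
qed


theorem theorem1p2:
  fixes n :: real
  defines "n \<equiv> real DIM('a::euclidean_space)"
  shows
    "(\<forall>(P::'a set) \<phi>. admissible P \<phi> \<longrightarrow>
        - (2 / (n + 1)) * (n / (n + 1)) ^ DIM('a) * Inf (\<phi> ` P) \<le> avg_abs P \<phi>
      \<and> avg_abs P \<phi> \<le> - 2 * Inf (\<phi> ` P))
   \<and> (\<forall>c. c > (2 / (n + 1)) * (n / (n + 1)) ^ DIM('a) \<longrightarrow>
        (\<exists>(P::'a set) \<phi>. admissible P \<phi> \<and> \<not> (- c * Inf (\<phi> ` P) \<le> avg_abs P \<phi>)))
   \<and> (\<forall>c. c < 2 \<longrightarrow>
        (\<exists>(P::'a set) \<phi>. admissible P \<phi> \<and> \<not> (avg_abs P \<phi> \<le> - c * Inf (\<phi> ` P))))"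
  unfolding n_def
proof (intro conjI allI impI)
  fix P :: "'a set" and \<phi> assume "admissible P \<phi>"
  from part1[OF this] show "- (2 / (real DIM('a) + 1)) * (real DIM('a) / (real DIM('a) + 1)) ^ DIM('a) * Inf (\<phi> ` P) \<le> avg_abs P \<phi>" by simp
next
  fix P :: "'a set" and \<phi> assume "admissible P \<phi>"
  from part1[OF this] show "avg_abs P \<phi> \<le> - 2 * Inf (\<phi> ` P)" by simp
next
  fix c :: real assume "c > (2 / (real DIM('a) + 1)) * (real DIM('a) / (real DIM('a) + 1)) ^ DIM('a)"
  from part2[OF this] show "\<exists>(P::'a set) \<phi>. admissible P \<phi> \<and> \<not> (- c * Inf (\<phi> ` P) \<le> avg_abs P \<phi>)" .
next
  fix c :: real assume "c < 2"
  from part3[OF this] show "\<exists>(P::'a set) \<phi>. admissible P \<phi> \<and> \<not> (avg_abs P \<phi> \<le> - c * Inf (\<phi> ` P))" .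
qed

end
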